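(* A semigroup $X$ is inverse if and only if there is an inverse subsemigroup $S\subset\upsilon(X)$ with $X\subset S$ (where $X$ is identified with the set of principal ultrafilters $\langle x\rangle$, $x\in X$).
   Context: An upfamily on $X$ is a family of nonempty subsets of $X$ closed under taking supersets in $X$; $\upsilon(X)$ is the set of all upfamilies, with operation $\mathcal A*\mathcal B=\big\langle \bigcup_{a\in A} a*B_a : A\in\mathcal A,\ \{B_a\}_{a\in A}\subset\mathcal B\big\rangle$, where $\langle\mathcal C\rangle=\{A\subset X:\exists C\in\mathcal C,\ C\subset A\}$; $x\in X$ is identified with $\langle x\rangle=\{A\subset X:x\in A\}$. A semigroup $S$ is inverse if each $x\in S$ has a unique $x^{-1}\in S$ with $xx^{-1}x=x$ and $x^{-1}xx^{-1}=x^{-1}$. *)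

theory Defs
  imports Main
begin

definition upclosure :: "'a set set \<Rightarrow> 'a set set" where
  "upclosure C = {A. \<exists>D\<in>C. D \<subseteq> A}"

definition upfamily :: "'a set set \<Rightarrow> bool" where
  "upfamily F \<longleftrightarrow> (\<forall>A\<in>F. A \<noteq> {}) \<and> (\<forall>A B. A \<in> F \<longrightarrow> A \<subseteq> B \<longrightarrow> B \<in> F)"

definition upmult :: "'a::semigroup_mult set set \<Rightarrow> 'a set set \<Rightarrow> 'a set set" where
  "upmult \<A> \<B> = upclosure
     {(\<Union>a\<in>A. (\<lambda>b. a * b) ` Bf a) | A Bf. A \<in> \<A> \<and> (\<forall>a\<in>A. Bf a \<in> \<B>)}"

definition princ :: "'a \<Rightarrow> 'a set set" where
  "princ x = {A. x \<in> A}"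

definition inverse_semigroup_on :: "'b set \<Rightarrow> ('b \<Rightarrow> 'b \<Rightarrow> 'b) \<Rightarrow> bool" where
  "inverse_semigroup_on S f \<longleftrightarrow>
     (\<forall>x\<in>S. \<forall>y\<in>S. f x y \<in> S) \<and>
     (\<forall>x\<in>S. \<forall>y\<in>S. \<forall>z\<in>S. f (f x y) z = f x (f y z)) \<and>
     (\<forall>x\<in>S. \<exists>!y. y \<in> S \<and> f (f x y) x = x \<and> f (f y x) y = y)"

end

theory Submission
  imports Defs
begin

lemma princ_mult: "upmult (princ x) (princ y) = princ ((x::'a::semigroup_mult) * y)"
proof
  show "upmult (princ x) (princ y) \<subseteq> princ (x * y)"
    unfolding upmult_def upclosure_def princ_def by blast
next
  show "princ (x * y) \<subseteq> upmult (princ x) (princ y)"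
  proof
    fix A assume "A \<in> princ (x*y)"
    hence xy: "x*y \<in> A" by (simp add: princ_def)
    have "(\<Union>a\<in>{x}. (\<lambda>b. a * b) ` (\<lambda>_. {y}) a) \<in>
      {(\<Union>a\<in>A. (\<lambda>b. a * b) ` Bf a) | A Bf. A \<in> princ x \<and> (\<forall>a\<in>A. Bf a \<in> princ y)}"
      by (rule CollectI, rule exI[of _ "{x}"], rule exI[of _ "\<lambda>_. {y}"]) (auto simp: princ_def)
    moreover have "(\<Union>a\<in>{x}. (\<lambda>b. a * b) ` (\<lambda>_. {y}) a) \<subseteq> A" using xy by simp
    ultimately show "A \<in> upmult (princ x) (princ y)"
      unfolding upmult_def upclosure_def by blast
  qed
qed

lemma princ_inj: "princ x = princ y \<Longrightarrow> x = y"
  unfolding princ_def by blast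

lemma upmult_mem:
  assumes "A \<in> upmult F G"
  obtains A' Bf where "A' \<in> F" "\<forall>a\<in>A'. Bf a \<in> G" "(\<Union>a\<in>A'. (\<lambda>b. a * b) ` Bf a) \<subseteq> A"
proof -
  from assms obtain D where "D \<in> {(\<Union>a\<in>A. (\<lambda>b. a * b) ` Bf a) | A Bf. A \<in> F \<and> (\<forall>a\<in>A. Bf a \<in> G)}" "D \<subseteq> A"
    unfolding upmult_def upclosure_def by blast
  then obtain A' Bf where "D = (\<Union>a\<in>A'. (\<lambda>b. a * b) ` Bf a)" "A' \<in> F" "\<forall>a\<in>A'. Bf a \<in> G"
    by blast
  thus ?thesis using that \<open>D \<subseteq> A\<close> by blast
qed

lemma regular_from:
  fixes x :: "'a::semigroup_mult"
  assumes F: "upfamily F" and eq: "upmult (upmult (princ x) F) (princ x) = princ x"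
  shows "\<exists>b. x * b * x = x"
proof -
  have "{x} \<in> upmult (upmult (princ x) F) (princ x)" using eq by (simp add: princ_def)
  then obtain A Bf where A: "A \<in> upmult (princ x) F" and Bf: "\<forall>a\<in>A. Bf a \<in> princ x"
    and sub: "(\<Union>a\<in>A. (\<lambda>b. a * b) ` Bf a) \<subseteq> {x}"
    by (rule upmult_mem)
  from A obtain A' Cf where A': "A' \<in> princ x" and Cf: "\<forall>a\<in>A'. Cf a \<in> F"
    and sub2: "(\<Union>a\<in>A'. (\<lambda>b. a * b) ` Cf a) \<subseteq> A"
    by (rule upmult_mem)
  have xA': "x \<in> A'" using A' by (simp add: princ_def)
  have "Cf x \<noteq> {}" using F Cf xA' unfolding upfamily_def by blast
  then obtain b where b: "b \<in> Cf x" by blast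
  have xbA: "x * b \<in> A" using sub2 xA' b by blast
  hence "x \<in> Bf (x * b)" using Bf by (simp add: princ_def)
  hence "x * b * x = x" using sub xbA by blast
  thus ?thesis by blast
qed
theorem corollary3p2:
  fixes X :: "'a::semigroup_mult itself"
  shows "inverse_semigroup_on (UNIV :: 'a set) (*) \<longleftrightarrow>
    (\<exists>S. S \<subseteq> {F :: 'a set set. upfamily F} \<and> inverse_semigroup_on S upmult
         \<and> range (princ :: 'a \<Rightarrow> 'a set set) \<subseteq> S)"
proof
  assume inv: "inverse_semigroup_on (UNIV :: 'a set) (*)"
  let ?S = "range (princ :: 'a \<Rightarrow> 'a set set)"
  have "?S \<subseteq> {F. upfamily F}" by (auto simp: upfamily_def princ_def)
  moreover have "inverse_semigroup_on ?S upmult"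
    unfolding inverse_semigroup_on_def
  proof (intro conjI ballI)
    fix F G assume "F \<in> ?S" "G \<in> ?S" thus "upmult F G \<in> ?S" by (auto simp: princ_mult)
  next
    fix F G H assume "F \<in> ?S" "G \<in> ?S" "H \<in> ?S"
    thus "upmult (upmult F G) H = upmult F (upmult G H)"
      by (auto simp: princ_mult mult.assoc)
  next
    fix F assume "F \<in> ?S"
    then obtain x where Fx: "F = princ x" by blast
    from inv obtain y where y: "x*y*x = x" "y*x*y = y"
      and u: "\<And>z. x*z*x = x \<Longrightarrow> z*x*z = z \<Longrightarrow> z = y"
      unfolding inverse_semigroup_on_def by blast
    show "\<exists>!G. G \<in> ?S \<and> upmult (upmult F G) F = F \<and> upmult (upmult G F) G = G"
    proof (rule ex1I[of _ "princ y"])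
      show "princ y \<in> ?S \<and> upmult (upmult F (princ y)) F = F \<and> upmult (upmult (princ y) F) (princ y) = princ y"
        using y by (simp add: Fx princ_mult)
    next
      fix G assume "G \<in> ?S \<and> upmult (upmult F G) F = F \<and> upmult (upmult G F) G = G"
      then obtain z where "G = princ z" "princ (x*z*x) = princ x" "princ (z*x*z) = princ z"
        by (auto simp: Fx princ_mult)
      thus "G = princ y" using u princ_inj by metis
    qed
  qed
  ultimately show "\<exists>S. S \<subseteq> {F :: 'a set set. upfamily F} \<and> inverse_semigroup_on S upmult
         \<and> range (princ :: 'a \<Rightarrow> 'a set set) \<subseteq> S" by blast
next
  assume "\<exists>S. S \<subseteq> {F :: 'a set set. upfamily F} \<and> inverse_semigroup_on S upmult
         \<and> range (princ :: 'a \<Rightarrow> 'a set set) \<subseteq> S"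
  then obtain S where Sup: "S \<subseteq> {F :: 'a set set. upfamily F}" and Sinv: "inverse_semigroup_on S upmult"
    and SX: "range (princ :: 'a \<Rightarrow> 'a set set) \<subseteq> S" by blast
  show "inverse_semigroup_on (UNIV :: 'a set) (*)"
    unfolding inverse_semigroup_on_def
  proof (intro conjI ballI)
    fix x y z :: 'a show "x * y * z = x * (y * z)" by (simp add: mult.assoc)
  next
    fix x :: 'a
    have px: "princ x \<in> S" using SX by blast
    have all: "\<forall>x\<in>S. \<exists>!y. y \<in> S \<and> upmult (upmult x y) x = x \<and> upmult (upmult y x) y = y"
      using Sinv unfolding inverse_semigroup_on_def by (rule conjunct2[THEN conjunct2])
    have ex: "\<exists>!G. G \<in> S \<and> upmult (upmult (princ x) G) (princ x) = princ x \<and> upmult (upmult G (princ x)) G = G"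
      using bspec[OF all px] .
    then obtain F where F: "F \<in> S" "upmult (upmult (princ x) F) (princ x) = princ x"
      and uq0: "\<And>G. G \<in> S \<and> upmult (upmult (princ x) G) (princ x) = princ x \<and>
          upmult (upmult G (princ x)) G = G \<Longrightarrow> G = F"
      by (elim ex1E) blast
    have uq: "\<And>G. G \<in> S \<Longrightarrow> upmult (upmult (princ x) G) (princ x) = princ x \<Longrightarrow>
          upmult (upmult G (princ x)) G = G \<Longrightarrow> G = F" using uq0 by blast
    have "upfamily F" using F Sup by blast
    then obtain b where b: "x * b * x = x" using regular_from F(2) by blast
    let ?y = "b * x * b"
    have y1: "x * ?y * x = x"
    proof -
      have "x * ?y * x = (x * b * x) * b * x" by (simp add: mult.assoc)
      also have "\<dots> = x" using b by simp
      finally show ?thesis .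
    qed
    have y2: "?y * x * ?y = ?y"
    proof -
      have "?y * x * ?y = b * ((x * b * x) * b * x) * b" by (simp add: mult.assoc)
      also have "\<dots> = ?y" using b by (simp add: mult.assoc)
      finally show ?thesis .
    qed
    show "\<exists>!y. y \<in> UNIV \<and> x * y * x = x \<and> y * x * y = y"
    proof (rule ex1I[of _ ?y])
      show "?y \<in> UNIV \<and> x * ?y * x = x \<and> ?y * x * ?y = ?y" using y1 y2 by simp
    next
      fix z assume z: "z \<in> UNIV \<and> x * z * x = x \<and> z * x * z = z"
      have "princ z = F" using z SX by (intro uq) (auto simp: princ_mult)
      moreover have "princ ?y = F" using y1 y2 SX by (intro uq) (auto simp: princ_mult)
      ultimately show "z = ?y" using princ_inj by metis
    qed
  qed simp
qed

end
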